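(* Let $\mathcal{L}=(\mathrm{Fm},\vdash)$ be a logic for which $\wedge_P$, $\vee_S$, $\bot_P$ and $\top_W$ hold, and let $N\subseteq\mathrm{Fm}\times\mathrm{Fm}$ be a normative system. For $1\le i\le4$ let $P_i=P_{N_i}$ and $P_i^c=(\mathrm{Fm}\times\mathrm{Fm})\setminus P_i$. Then $P_1^c$ is closed under $(\top)^{\rhd},(\mathrm{SI})^{\rhd},(\mathrm{WO})^{\rhd},(\mathrm{AND})^{\rhd}$; $P_2^c$ is closed under these and $(\mathrm{OR})^{\rhd}$; $P_3^c$ is closed under $(\top)^{\rhd},(\mathrm{SI})^{\rhd},(\mathrm{WO})^{\rhd},(\mathrm{AND})^{\rhd},(\mathrm{CT})^{\rhd}$; $P_4^c$ is closed under $(\top)^{\rhd},(\mathrm{SI})^{\rhd},(\mathrm{WO})^{\rhd},(\mathrm{AND})^{\rhd},(\mathrm{OR})^{\rhd},(\mathrm{CT})^{\rhd}$, where in $(\mathrm{CT})^{\rhd}$ for $P_i^c$ the normative system referred to is $N_i$.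
   Context: Logic $\mathcal{L}=(\mathrm{Fm},\vdash)$ with consequence relation $\vdash$; $Cn(\Gamma)=\{\psi\mid\Gamma\vdash\psi\}$, $Cn(\varphi,\psi)=Cn(\{\varphi,\psi\})$. $\wedge_P$: a binary term $\wedge$ with $Cn(\varphi\wedge\psi)=Cn(\{\varphi,\psi\})$; $\vee_S$: a binary term $\vee$ with $Cn(\Gamma,\varphi\vee\psi)=Cn(\Gamma\cup\{\varphi\})\cap Cn(\Gamma\cup\{\psi\})$ for all $\Gamma$; $\bot_P$: a constant $\bot$ with $Cn(\{\bot\})=\mathrm{Fm}$; $\top_W$: a constant $\top$ with $\top\in Cn(\{\varphi\})$ for all $\varphi$. Rules on a normative system $N$: $(\top)$: $(\top,\top)\in N$; (SI): $(\alpha,\varphi)\in N,\beta\vdash\alpha\Rightarrow(\beta,\varphi)\in N$; (WO): $(\alpha,\varphi)\in N,\varphi\vdash\psi\Rightarrow(\alpha,\psi)\in N$; (AND): $(\alpha,\varphi),(\alpha,\psi)\in N\Rightarrow(\alpha,\varphi\wedge\psi)\in N$; (OR): $(\alpha,\varphi),(\beta,\varphi)\in N\Rightarrow(\alpha\vee\beta,\varphi)\in N$; (CT): $(\alpha,\varphi),(\alpha\wedge\varphi,\psi)\in N\Rightarrow(\alpha,\psi)\in N$. $N_i$ is the smallest extension of $N$ closed under: $N_1$: $(\top)$,(SI),(WO),(AND); $N_2$: these and (OR); $N_3$: $(\top)$,(SI),(WO),(AND),(CT); $N_4$: all of $(\top)$,(SI),(WO),(AND),(OR),(CT). For a normative system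 $M$, $P_M=\{(\alpha,\varphi)\mid\forall\psi((\alpha,\psi)\in M\Rightarrow Cn(\varphi,\psi)\neq\mathrm{Fm})\}$. Rules on a relation $R$ (relative to a normative system $M$): $(\top)^{\rhd}$: $(\top,\bot)\in R$; $(\mathrm{SI})^{\rhd}$: $(\beta,\varphi)\in R,\alpha\vdash\beta\Rightarrow(\alpha,\varphi)\in R$; $(\mathrm{WO})^{\rhd}$: $(\alpha,\psi)\in R,\varphi\vdash\psi\Rightarrow(\alpha,\varphi)\in R$; $(\mathrm{AND})^{\rhd}$: $(\alpha,\varphi),(\alpha,\psi)\in R\Rightarrow(\alpha,\varphi\vee\psi)\in R$; $(\mathrm{OR})^{\rhd}$: $(\alpha,\varphi),(\beta,\varphi)\in R\Rightarrow(\alpha\vee\beta,\varphi)\in R$; $(\mathrm{CT})^{\rhd}$: $(\alpha,\varphi)\in M,(\alpha\wedge\varphi,\psi)\in R\Rightarrow(\alpha,\psi)\in R$. *)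

theory Defs
  imports Main
begin

text \<open>A logic is given by an abstract type of formulas 'f and a consequence
relation cons :: 'f set => 'f => bool (Gamma |- phi), assumed Tarskian.\<close>

definition Cn :: "('f set \<Rightarrow> 'f \<Rightarrow> bool) \<Rightarrow> 'f set \<Rightarrow> 'f set" where
  "Cn cons \<Gamma> = {\<psi>. cons \<Gamma> \<psi>}"

definition tarskian :: "('f set \<Rightarrow> 'f \<Rightarrow> bool) \<Rightarrow> bool" where
  "tarskian cons \<longleftrightarrow>
     (\<forall>\<Gamma> \<phi>. \<phi> \<in> \<Gamma> \<longrightarrow> cons \<Gamma> \<phi>) \<and>
     (\<forall>\<Gamma> \<Delta> \<phi>. \<Gamma> \<subseteq> \<Delta> \<longrightarrow> cons \<Gamma> \<phi> \<longrightarrow> cons \<Delta> \<phi>) \<and>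
     (\<forall>\<Gamma> \<Delta> \<phi>. (\<forall>\<psi>\<in>\<Delta>. cons \<Gamma> \<psi>) \<longrightarrow> cons \<Delta> \<phi> \<longrightarrow> cons \<Gamma> \<phi>)"

definition conj_P :: "('f set \<Rightarrow> 'f \<Rightarrow> bool) \<Rightarrow> ('f \<Rightarrow> 'f \<Rightarrow> 'f) \<Rightarrow> bool" where
  "conj_P cons cj \<longleftrightarrow> (\<forall>\<phi> \<psi>. Cn cons {cj \<phi> \<psi>} = Cn cons {\<phi>, \<psi>})"

definition disj_S :: "('f set \<Rightarrow> 'f \<Rightarrow> bool) \<Rightarrow> ('f \<Rightarrow> 'f \<Rightarrow> 'f) \<Rightarrow> bool" where
  "disj_S cons dj \<longleftrightarrow> (\<forall>\<Gamma> \<phi> \<psi>.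
     Cn cons (\<Gamma> \<union> {dj \<phi> \<psi>}) = Cn cons (\<Gamma> \<union> {\<phi>}) \<inter> Cn cons (\<Gamma> \<union> {\<psi>}))"

definition bot_P :: "('f set \<Rightarrow> 'f \<Rightarrow> bool) \<Rightarrow> 'f \<Rightarrow> bool" where
  "bot_P cons fb \<longleftrightarrow> Cn cons {fb} = UNIV"

definition top_W :: "('f set \<Rightarrow> 'f \<Rightarrow> bool) \<Rightarrow> 'f \<Rightarrow> bool" where
  "top_W cons ft \<longleftrightarrow> (\<forall>\<phi>. ft \<in> Cn cons {\<phi>})"

definition rule_top :: "'f \<Rightarrow> ('f \<times> 'f) set \<Rightarrow> bool" where
  "rule_top ft N \<longleftrightarrow> (ft, ft) \<in> N"

definition rule_SI :: "('f set \<Rightarrow> 'f \<Rightarrow> bool) \<Rightarrow> ('f \<times> 'f) set \<Rightarrow> bool" where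
  "rule_SI cons N \<longleftrightarrow> (\<forall>\<alpha> \<phi> \<beta>. (\<alpha>, \<phi>) \<in> N \<longrightarrow> cons {\<beta>} \<alpha> \<longrightarrow> (\<beta>, \<phi>) \<in> N)"

definition rule_WO :: "('f set \<Rightarrow> 'f \<Rightarrow> bool) \<Rightarrow> ('f \<times> 'f) set \<Rightarrow> bool" where
  "rule_WO cons N \<longleftrightarrow> (\<forall>\<alpha> \<phi> \<psi>. (\<alpha>, \<phi>) \<in> N \<longrightarrow> cons {\<phi>} \<psi> \<longrightarrow> (\<alpha>, \<psi>) \<in> N)"

definition rule_AND :: "('f \<Rightarrow> 'f \<Rightarrow> 'f) \<Rightarrow> ('f \<times> 'f) set \<Rightarrow> bool" where
  "rule_AND cj N \<longleftrightarrow> (\<forall>\<alpha> \<phi> \<psi>. (\<alpha>, \<phi>) \<in> N \<longrightarrow> (\<alpha>, \<psi>) \<in> N \<longrightarrow> (\<alpha>, cj \<phi> \<psi>) \<in> N)"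

definition rule_OR :: "('f \<Rightarrow> 'f \<Rightarrow> 'f) \<Rightarrow> ('f \<times> 'f) set \<Rightarrow> bool" where
  "rule_OR dj N \<longleftrightarrow> (\<forall>\<alpha> \<beta> \<phi>. (\<alpha>, \<phi>) \<in> N \<longrightarrow> (\<beta>, \<phi>) \<in> N \<longrightarrow> (dj \<alpha> \<beta>, \<phi>) \<in> N)"

definition rule_CT :: "('f \<Rightarrow> 'f \<Rightarrow> 'f) \<Rightarrow> ('f \<times> 'f) set \<Rightarrow> bool" where
  "rule_CT cj N \<longleftrightarrow> (\<forall>\<alpha> \<phi> \<psi>. (\<alpha>, \<phi>) \<in> N \<longrightarrow> (cj \<alpha> \<phi>, \<psi>) \<in> N \<longrightarrow> (\<alpha>, \<psi>) \<in> N)"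

definition smallest_closed :: "(('f \<times> 'f) set \<Rightarrow> bool) \<Rightarrow> ('f \<times> 'f) set \<Rightarrow> ('f \<times> 'f) set" where
  "smallest_closed C N = \<Inter> {M. N \<subseteq> M \<and> C M}"

definition N1 where
  "N1 cons cj ft N = smallest_closed
     (\<lambda>M. rule_top ft M \<and> rule_SI cons M \<and> rule_WO cons M \<and> rule_AND cj M) N"

definition N2 where
  "N2 cons cj dj ft N = smallest_closed
     (\<lambda>M. rule_top ft M \<and> rule_SI cons M \<and> rule_WO cons M \<and> rule_AND cj M \<and> rule_OR dj M) N"

definition N3 where
  "N3 cons cj ft N = smallest_closed
     (\<lambda>M. rule_top ft M \<and> rule_SI cons M \<and> rule_WO cons M \<and> rule_AND cj M \<and> rule_CT cj M) N"

definition N4 where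
  "N4 cons cj dj ft N = smallest_closed
     (\<lambda>M. rule_top ft M \<and> rule_SI cons M \<and> rule_WO cons M \<and> rule_AND cj M \<and> rule_OR dj M
          \<and> rule_CT cj M) N"

definition Perm :: "('f set \<Rightarrow> 'f \<Rightarrow> bool) \<Rightarrow> ('f \<times> 'f) set \<Rightarrow> ('f \<times> 'f) set" where
  "Perm cons M = {(\<alpha>, \<phi>). \<forall>\<psi>. (\<alpha>, \<psi>) \<in> M \<longrightarrow> Cn cons {\<phi>, \<psi>} \<noteq> UNIV}"

definition drule_top :: "'f \<Rightarrow> 'f \<Rightarrow> ('f \<times> 'f) set \<Rightarrow> bool" where
  "drule_top ft fb R \<longleftrightarrow> (ft, fb) \<in> R"

definition drule_SI :: "('f set \<Rightarrow> 'f \<Rightarrow> bool) \<Rightarrow> ('f \<times> 'f) set \<Rightarrow> bool" where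
  "drule_SI cons R \<longleftrightarrow> (\<forall>\<alpha> \<beta> \<phi>. (\<beta>, \<phi>) \<in> R \<longrightarrow> cons {\<alpha>} \<beta> \<longrightarrow> (\<alpha>, \<phi>) \<in> R)"

definition drule_WO :: "('f set \<Rightarrow> 'f \<Rightarrow> bool) \<Rightarrow> ('f \<times> 'f) set \<Rightarrow> bool" where
  "drule_WO cons R \<longleftrightarrow> (\<forall>\<alpha> \<phi> \<psi>. (\<alpha>, \<psi>) \<in> R \<longrightarrow> cons {\<phi>} \<psi> \<longrightarrow> (\<alpha>, \<phi>) \<in> R)"

definition drule_AND :: "('f \<Rightarrow> 'f \<Rightarrow> 'f) \<Rightarrow> ('f \<times> 'f) set \<Rightarrow> bool" where
  "drule_AND dj R \<longleftrightarrow> (\<forall>\<alpha> \<phi> \<psi>. (\<alpha>, \<phi>) \<in> R \<longrightarrow> (\<alpha>, \<psi>) \<in> R \<longrightarrow> (\<alpha>, dj \<phi> \<psi>) \<in> R)"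

definition drule_OR :: "('f \<Rightarrow> 'f \<Rightarrow> 'f) \<Rightarrow> ('f \<times> 'f) set \<Rightarrow> bool" where
  "drule_OR dj R \<longleftrightarrow> (\<forall>\<alpha> \<beta> \<phi>. (\<alpha>, \<phi>) \<in> R \<longrightarrow> (\<beta>, \<phi>) \<in> R \<longrightarrow> (dj \<alpha> \<beta>, \<phi>) \<in> R)"

definition drule_CT :: "('f \<Rightarrow> 'f \<Rightarrow> 'f) \<Rightarrow> ('f \<times> 'f) set \<Rightarrow> ('f \<times> 'f) set \<Rightarrow> bool" where
  "drule_CT cj M R \<longleftrightarrow> (\<forall>\<alpha> \<phi> \<psi>. (\<alpha>, \<phi>) \<in> M \<longrightarrow> (cj \<alpha> \<phi>, \<psi>) \<in> R \<longrightarrow> (\<alpha>, \<psi>) \<in> R)"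

end

theory Submission
  imports Defs
begin

lemma Inter_rules:
  assumes "\<forall>M\<in>S. rule_top ft M" shows "rule_top ft (\<Inter>S)"
  using assms unfolding rule_top_def by blast

lemma Inter_SI: "\<forall>M\<in>S. rule_SI cons M \<Longrightarrow> rule_SI cons (\<Inter>S)"
  unfolding rule_SI_def by blast
lemma Inter_WO: "\<forall>M\<in>S. rule_WO cons M \<Longrightarrow> rule_WO cons (\<Inter>S)"
  unfolding rule_WO_def by blast
lemma Inter_AND: "\<forall>M\<in>S. rule_AND cj M \<Longrightarrow> rule_AND cj (\<Inter>S)"
  unfolding rule_AND_def by blast
lemma Inter_OR: "\<forall>M\<in>S. rule_OR dj M \<Longrightarrow> rule_OR dj (\<Inter>S)"
  unfolding rule_OR_def by blast
lemma Inter_CT: "\<forall>M\<in>S. rule_CT cj M \<Longrightarrow> rule_CT cj (\<Inter>S)"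
  unfolding rule_CT_def by blast

lemma N1_cl: "rule_top ft (N1 cons cj ft N) \<and> rule_SI cons (N1 cons cj ft N)
  \<and> rule_WO cons (N1 cons cj ft N) \<and> rule_AND cj (N1 cons cj ft N)"
  unfolding N1_def smallest_closed_def
  by (intro conjI Inter_rules Inter_SI Inter_WO Inter_AND) auto

lemma N2_cl: "rule_top ft (N2 cons cj dj ft N) \<and> rule_SI cons (N2 cons cj dj ft N)
  \<and> rule_WO cons (N2 cons cj dj ft N) \<and> rule_AND cj (N2 cons cj dj ft N)
  \<and> rule_OR dj (N2 cons cj dj ft N)"
  unfolding N2_def smallest_closed_def
  by (intro conjI Inter_rules Inter_SI Inter_WO Inter_AND Inter_OR) auto

lemma N3_cl: "rule_top ft (N3 cons cj ft N) \<and> rule_SI cons (N3 cons cj ft N)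
  \<and> rule_WO cons (N3 cons cj ft N) \<and> rule_AND cj (N3 cons cj ft N)
  \<and> rule_CT cj (N3 cons cj ft N)"
  unfolding N3_def smallest_closed_def
  by (intro conjI Inter_rules Inter_SI Inter_WO Inter_AND Inter_CT) auto

lemma N4_cl: "rule_top ft (N4 cons cj dj ft N) \<and> rule_SI cons (N4 cons cj dj ft N)
  \<and> rule_WO cons (N4 cons cj dj ft N) \<and> rule_AND cj (N4 cons cj dj ft N)
  \<and> rule_OR dj (N4 cons cj dj ft N) \<and> rule_CT cj (N4 cons cj dj ft N)"
  unfolding N4_def smallest_closed_def
  by (intro conjI Inter_rules Inter_SI Inter_WO Inter_AND Inter_OR Inter_CT) auto

lemma compl_Perm: "(a, p) \<in> - Perm cons M \<longleftrightarrow> (\<exists>c. (a, c) \<in> M \<and> (\<forall>x. cons {p, c} x))"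
  unfolding Perm_def Cn_def by auto

context
  fixes cons :: "'f set \<Rightarrow> 'f \<Rightarrow> bool"
  assumes T: "tarskian cons"
begin

lemma refl': "p \<in> G \<Longrightarrow> cons G p" using T unfolding tarskian_def by blast
lemma mono': "G \<subseteq> D \<Longrightarrow> cons G p \<Longrightarrow> cons D p" using T unfolding tarskian_def by blast
lemma cut': "(\<forall>q\<in>D. cons G q) \<Longrightarrow> cons D p \<Longrightarrow> cons G p" using T unfolding tarskian_def by blast

lemma d_top:
  assumes "bot_P cons fb" "rule_top ft M"
  shows "drule_top ft fb (- Perm cons M)"
proof -
  have "\<forall>x. cons {fb, ft} x"
    using assms(1) mono'[of "{fb}" "{fb,ft}"] unfolding bot_P_def Cn_def by blast
  thus ?thesis using assms(2) unfolding drule_top_def rule_top_def compl_Perm by blast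
qed

lemma d_SI: "rule_SI cons M \<Longrightarrow> drule_SI cons (- Perm cons M)"
  unfolding drule_SI_def rule_SI_def compl_Perm by blast

lemma d_WO:
  assumes "rule_WO cons M" shows "drule_WO cons (- Perm cons M)"
  unfolding drule_WO_def compl_Perm
proof (intro allI impI)
  fix a p q
  assume "\<exists>c. (a, c) \<in> M \<and> (\<forall>x. cons {q, c} x)" and pq: "cons {p} q"
  then obtain c where c: "(a, c) \<in> M" "\<forall>x. cons {q, c} x" by blast
  have "\<forall>x. cons {p, c} x"
  proof
    fix x
    have "cons {p, c} q" using mono'[OF _ pq, of "{p,c}"] by blast
    moreover have "cons {p, c} c" by (rule refl') simp
    ultimately show "cons {p, c} x" using cut'[of "{q,c}" "{p,c}" x] c(2) by blast
  qed
  thus "\<exists>c. (a, c) \<in> M \<and> (\<forall>x. cons {p, c} x)" using c by blast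
qed

lemma conj_l: "conj_P cons cj \<Longrightarrow> cons {cj a b} a"
  unfolding conj_P_def Cn_def by (metis (mono_tags) insertI1 mem_Collect_eq refl')
lemma conj_r: "conj_P cons cj \<Longrightarrow> cons {cj a b} b"
  unfolding conj_P_def Cn_def
  by (metis (mono_tags, lifting) insertI1 insert_commute mem_Collect_eq refl')

lemma disj_elim:
  assumes "disj_S cons dj" "cons (G \<union> {a}) x" "cons (G \<union> {b}) x"
  shows "cons (G \<union> {dj a b}) x"
  using assms unfolding disj_S_def Cn_def by blast

lemma disj_l: "disj_S cons dj \<Longrightarrow> cons {a} (dj a b)"
proof -
  assume d: "disj_S cons dj"
  have "dj a b \<in> Cn cons ({} \<union> {dj a b})" unfolding Cn_def by (simp add: refl')
  thus ?thesis using d unfolding disj_S_def by (auto simp: Cn_def)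
qed
lemma disj_r: "disj_S cons dj \<Longrightarrow> cons {b} (dj a b)"
proof -
  assume d: "disj_S cons dj"
  have "dj a b \<in> Cn cons ({} \<union> {dj a b})" unfolding Cn_def by (simp add: refl')
  thus ?thesis using d unfolding disj_S_def by (auto simp: Cn_def)
qed

lemma d_AND:
  assumes cP: "conj_P cons cj" and dS: "disj_S cons dj" and A: "rule_AND cj M"
  shows "drule_AND dj (- Perm cons M)"
  unfolding drule_AND_def compl_Perm
proof (intro allI impI)
  fix a p q
  assume "\<exists>c. (a, c) \<in> M \<and> (\<forall>x. cons {p, c} x)" "\<exists>c. (a, c) \<in> M \<and> (\<forall>x. cons {q, c} x)"
  then obtain c1 c2 where c: "(a, c1) \<in> M" "\<forall>x. cons {p, c1} x"
     "(a, c2) \<in> M" "\<forall>x. cons {q, c2} x" by blast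
  let ?c = "cj c1 c2"
  have M: "(a, ?c) \<in> M" using A c unfolding rule_AND_def by blast
  have "\<forall>x. cons {dj p q, ?c} x"
  proof
    fix x
    have c1: "cons {?c} c1" by (rule conj_l[OF cP])
    have c2: "cons {?c} c2" by (rule conj_r[OF cP])
    have h1: "cons ({?c} \<union> {p}) x"
    proof (rule cut'[of "{p, c1}"])
      show "\<forall>qa\<in>{p, c1}. cons ({?c} \<union> {p}) qa"
        using mono'[OF _ c1, of "{?c} \<union> {p}"] refl'[of p "{?c} \<union> {p}"] by auto
    qed (use c in auto)
    have h2: "cons ({?c} \<union> {q}) x"
    proof (rule cut'[of "{q, c2}"])
      show "\<forall>qa\<in>{q, c2}. cons ({?c} \<union> {q}) qa"
        using mono'[OF _ c2, of "{?c} \<union> {q}"] refl'[of q "{?c} \<union> {q}"] by auto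
    qed (use c in auto)
    have "cons ({?c} \<union> {dj p q}) x" by (rule disj_elim[OF dS h1 h2])
    thus "cons {dj p q, ?c} x" by (simp add: insert_commute)
  qed
  thus "\<exists>c. (a, c) \<in> M \<and> (\<forall>x. cons {dj p q, c} x)" using M by blast
qed

lemma d_OR:
  assumes dS: "disj_S cons dj" and W: "rule_WO cons M" and O: "rule_OR dj M"
  shows "drule_OR dj (- Perm cons M)"
  unfolding drule_OR_def compl_Perm
proof (intro allI impI)
  fix a b p
  assume "\<exists>c. (a, c) \<in> M \<and> (\<forall>x. cons {p, c} x)" "\<exists>c. (b, c) \<in> M \<and> (\<forall>x. cons {p, c} x)"
  then obtain c1 c2 where c: "(a, c1) \<in> M" "\<forall>x. cons {p, c1} x"
     "(b, c2) \<in> M" "\<forall>x. cons {p, c2} x" by blast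
  let ?c = "dj c1 c2"
  have "(a, ?c) \<in> M" using W c(1) disj_l[OF dS] unfolding rule_WO_def by blast
  moreover have "(b, ?c) \<in> M" using W c(3) disj_r[OF dS] unfolding rule_WO_def by blast
  ultimately have M: "(dj a b, ?c) \<in> M" using O unfolding rule_OR_def by blast
  have "\<forall>x. cons {p, ?c} x"
  proof
    fix x
    have "cons ({p} \<union> {c1}) x" "cons ({p} \<union> {c2}) x" using c by (simp_all add: insert_commute)
    from disj_elim[OF dS this] show "cons {p, ?c} x" by (simp add: insert_commute)
  qed
  thus "\<exists>c. (dj a b, c) \<in> M \<and> (\<forall>x. cons {p, c} x)" using M by blast
qed

end

lemma d_CT: "rule_CT cj M \<Longrightarrow> drule_CT cj M (- Perm cons M)"
  unfolding drule_CT_def rule_CT_def compl_Perm by blast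

theorem corollary4p6:
  fixes cons :: "'f set \<Rightarrow> 'f \<Rightarrow> bool"
    and cj dj :: "'f \<Rightarrow> 'f \<Rightarrow> 'f"
    and fb ft :: 'f
    and N :: "('f \<times> 'f) set"
  assumes "tarskian cons"
    and "conj_P cons cj" and "disj_S cons dj"
    and "bot_P cons fb" and "top_W cons ft"
  defines "P1c \<equiv> - Perm cons (N1 cons cj ft N)"
    and "P2c \<equiv> - Perm cons (N2 cons cj dj ft N)"
    and "P3c \<equiv> - Perm cons (N3 cons cj ft N)"
    and "P4c \<equiv> - Perm cons (N4 cons cj dj ft N)"
  shows "(drule_top ft fb P1c \<and> drule_SI cons P1c \<and> drule_WO cons P1c \<and> drule_AND dj P1c)
    \<and> (drule_top ft fb P2c \<and> drule_SI cons P2c \<and> drule_WO cons P2c \<and> drule_AND dj P2c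
         \<and> drule_OR dj P2c)
    \<and> (drule_top ft fb P3c \<and> drule_SI cons P3c \<and> drule_WO cons P3c \<and> drule_AND dj P3c
         \<and> drule_CT cj (N3 cons cj ft N) P3c)
    \<and> (drule_top ft fb P4c \<and> drule_SI cons P4c \<and> drule_WO cons P4c \<and> drule_AND dj P4c
         \<and> drule_OR dj P4c \<and> drule_CT cj (N4 cons cj dj ft N) P4c)"
  unfolding P1c_def P2c_def P3c_def P4c_def
  using N1_cl[of ft cons cj N] N2_cl[of ft cons cj dj N] N3_cl[of ft cons cj N]
    N4_cl[of ft cons cj dj N]
    d_top[OF assms(1) assms(4)] d_SI[OF assms(1)] d_WO[OF assms(1)]
    d_AND[OF assms(1) assms(2) assms(3)] d_OR[OF assms(1) assms(3)] d_CT
  by blast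

end
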